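(* Let $n\in\mathbb{Z}^+$, $n\geq 2$, $\beta=\frac{n-3}{n-1}$, let $\alpha:[0,\infty)\to\mathbb{R}$ be continuous, and let $u$ be a $C^3$ solution on $[0,1]\times[0,T)$ of $$u_{xxt}+uu_{xxx}+\beta u_xu_{xx}+\alpha(t)u_{xx}=0$$ with $u(1,t)=u_x(0,t)=u_x(1,t)=0$. Let $H(t)=-\int_0^1u_x(x,t)\,dx=u(0,t)$. Then for $t\in[0,T)$, $$H'(t)+\alpha(t)H(t)+\frac{n}{n-1}\int_0^1 u_x(x,t)^2\,dx=0,$$ and consequently $H'(t)+\alpha(t)H(t)+\frac{n}{n-1}H(t)^2\leq 0$. *)

theory Defs
  imports "HOL-Analysis.Analysis"
begin

text \<open>Functions of (x,t) on a set S of the plane. Partial derivatives are taken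
  relative to S (one-sided at boundary points), via the Frechet derivative within S.\<close>

definition pdx :: "(real \<times> real) set \<Rightarrow> (real \<times> real \<Rightarrow> real) \<Rightarrow> real \<times> real \<Rightarrow> real" where
  "pdx S f p = frechet_derivative f (at p within S) (1, 0)"

definition pdt :: "(real \<times> real) set \<Rightarrow> (real \<times> real \<Rightarrow> real) \<Rightarrow> real \<times> real \<Rightarrow> real" where
  "pdt S f p = frechet_derivative f (at p within S) (0, 1)"

fun Ck_on :: "nat \<Rightarrow> (real \<times> real) set \<Rightarrow> (real \<times> real \<Rightarrow> real) \<Rightarrow> bool" where
  "Ck_on 0 S f = continuous_on S f"
| "Ck_on (Suc k) S f =
     ((\<forall>p\<in>S. f differentiable (at p within S)) \<and> continuous_on S f \<and>
      Ck_on k S (pdx S f) \<and> Ck_on k S (pdt S f))"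

end

theory Submission
  imports Defs
begin

lemma pdx_deriv:
  assumes d: "f differentiable (at (x,t) within S)" and A: "\<And>y. y \<in> A \<Longrightarrow> (y,t) \<in> S"
  shows "((\<lambda>y. f (y,t)) has_real_derivative pdx S f (x,t)) (at x within A)"
proof -
  let ?D = "frechet_derivative f (at (x,t) within S)"
  have hD: "(f has_derivative ?D) (at (x,t) within S)" using d frechet_derivative_works by blast
  have sub: "(\<lambda>y. (y,t)) ` A \<subseteq> S" using A by auto
  have hD2: "(f has_derivative ?D) (at ((\<lambda>y. (y,t)) x) within (\<lambda>y. (y,t)) ` A)"
    using has_derivative_subset[OF hD sub] by simp
  have hp: "((\<lambda>y. (y,t)) has_derivative (\<lambda>h. (h,0))) (at x within A)"
    by (auto intro!: derivative_eq_intros)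
  have c: "((f \<circ> (\<lambda>y. (y,t))) has_derivative (?D \<circ> (\<lambda>h. (h,0)))) (at x within A)"
    by (rule diff_chain_within[OF hp hD2])
  have lin: "linear ?D" using hD has_derivative_linear by blast
  have eq: "(?D \<circ> (\<lambda>h. (h,0))) = (\<lambda>h. pdx S f (x,t) * h)"
  proof
    fix h :: real
    have "?D (h,0) = ?D (h *\<^sub>R (1,0))" by simp
    also have "\<dots> = h *\<^sub>R ?D (1,0)" using lin linear_scale by blast
    finally show "(?D \<circ> (\<lambda>h. (h,0))) h = pdx S f (x,t) * h" by (simp add: pdx_def)
  qed
  show ?thesis unfolding has_field_derivative_def using c eq by (simp add: o_def)
qed

lemma pdt_deriv:
  assumes d: "f differentiable (at (x,t) within S)" and A: "\<And>y. y \<in> A \<Longrightarrow> (x,y) \<in> S"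
  shows "((\<lambda>y. f (x,y)) has_real_derivative pdt S f (x,t)) (at t within A)"
proof -
  let ?D = "frechet_derivative f (at (x,t) within S)"
  have hD: "(f has_derivative ?D) (at (x,t) within S)" using d frechet_derivative_works by blast
  have sub: "(\<lambda>y. (x,y)) ` A \<subseteq> S" using A by auto
  have hD2: "(f has_derivative ?D) (at ((\<lambda>y. (x,y)) t) within (\<lambda>y. (x,y)) ` A)"
    using has_derivative_subset[OF hD sub] by simp
  have hp: "((\<lambda>y. (x,y)) has_derivative (\<lambda>h. (0,h))) (at t within A)"
    by (auto intro!: derivative_eq_intros)
  have c: "((f \<circ> (\<lambda>y. (x,y))) has_derivative (?D \<circ> (\<lambda>h. (0,h)))) (at t within A)"
    by (rule diff_chain_within[OF hp hD2])
  have lin: "linear ?D" using hD has_derivative_linear by blast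
  have eq: "(?D \<circ> (\<lambda>h. (0,h))) = (\<lambda>h. pdt S f (x,t) * h)"
  proof
    fix h :: real
    have "?D (0,h) = ?D (h *\<^sub>R (0,1))" by simp
    also have "\<dots> = h *\<^sub>R ?D (0,1)" using lin linear_scale by blast
    finally show "(?D \<circ> (\<lambda>h. (0,h))) h = pdt S f (x,t) * h" by (simp add: pdt_def)
  qed
  show ?thesis unfolding has_field_derivative_def using c eq by (simp add: o_def)
qed

lemma cont_slice:
  assumes "continuous_on S g" "\<And>x. x \<in> A \<Longrightarrow> (x,t) \<in> S"
  shows "continuous_on A (\<lambda>x. g (x,t))"
  by (rule continuous_on_compose2[OF assms(1), of _ "\<lambda>x. (x,t)"]) (auto intro!: continuous_intros assms(2))

lemma cs_ineq:
  fixes g :: "real \<Rightarrow> real"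
  assumes "continuous_on {0..1} g"
  shows "(integral {0..1} g)^2 \<le> integral {0..1} (\<lambda>x. (g x)^2)"
proof -
  let ?m = "integral {0..1} g"
  have i1: "g integrable_on {0..1}" using assms integrable_continuous_interval by blast
  have i2: "(\<lambda>x. (g x)^2) integrable_on {0..1}"
    by (rule integrable_continuous_interval) (auto intro!: continuous_intros assms)
  have "0 \<le> integral {0..1} (\<lambda>x. (g x - ?m)^2)"
    by (rule integral_nonneg) (auto intro!: integrable_continuous_interval continuous_intros assms)
  also have "(\<lambda>x. (g x - ?m)^2) = (\<lambda>x. (g x)^2 - 2 * ?m * g x + ?m^2)"
    by (auto simp: power2_eq_square algebra_simps)
  also have "integral {0..1} \<dots> = integral {0..1} (\<lambda>x. (g x)^2) - 2 * ?m * ?m + ?m^2"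
  proof (rule integral_unique)
    have a: "(g has_integral ?m) {0..1}" using i1 by (simp add: integrable_integral)
    have b: "((\<lambda>x. (g x)^2) has_integral integral {0..1} (\<lambda>x. (g x)^2)) {0..1}" using i2 by (simp add: integrable_integral)
    have c: "((\<lambda>x::real. ?m^2) has_integral ?m^2) {0..1}" using has_integral_const_real[of "?m^2" "0::real" "1::real"] by simp
    show "((\<lambda>x. (g x)^2 - 2 * ?m * g x + ?m^2) has_integral integral {0..1} (\<lambda>x. (g x)^2) - 2 * ?m * ?m + ?m^2) {0..1}"
      by (intro has_integral_add has_integral_diff b c has_integral_mult_right a)
  qed
  finally show ?thesis by (simp add: power2_eq_square)
qed

theorem mainTheorem3:
  fixes n :: nat and \<alpha> :: "real \<Rightarrow> real" and u :: "real \<times> real \<Rightarrow> real"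
    and T \<beta> :: real
  defines "S \<equiv> {0..1} \<times> {0..<T}"
  assumes n: "n \<ge> 2"
    and beta: "\<beta> = (real n - 3) / (real n - 1)"
    and alpha_cont: "continuous_on {0..} \<alpha>"
    and C3: "Ck_on 3 S u"
    and pde: "\<forall>x t. (x, t) \<in> S \<longrightarrow>
        pdt S (pdx S (pdx S u)) (x, t) + u (x, t) * pdx S (pdx S (pdx S u)) (x, t)
        + \<beta> * pdx S u (x, t) * pdx S (pdx S u) (x, t) + \<alpha> t * pdx S (pdx S u) (x, t) = 0"
    and bc: "\<forall>t\<in>{0..<T}. u (1, t) = 0 \<and> pdx S u (0, t) = 0 \<and> pdx S u (1, t) = 0"
    and H_def: "\<forall>t. H t = u (0, t)"
  shows "\<forall>t\<in>{0..<T}. H t = - integral {0..1} (\<lambda>x. pdx S u (x, t)) \<and>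
     (\<exists>H'. (H has_real_derivative H') (at t within {0..<T}) \<and>
        H' + \<alpha> t * H t + real n / (real n - 1) * integral {0..1} (\<lambda>x. (pdx S u (x, t))^2) = 0 \<and>
        H' + \<alpha> t * H t + real n / (real n - 1) * (H t)^2 \<le> 0)"
proof
  define u1 where "u1 = pdx S u"
  define u2 where "u2 = pdx S u1"
  define u3 where "u3 = pdx S u2"
  define u2t where "u2t = pdt S u2"
  have C3': "Ck_on (Suc (Suc (Suc 0))) S u" using C3 by (simp add: numeral_3_eq_3)
  have du: "\<And>p. p \<in> S \<Longrightarrow> u differentiable (at p within S)"
   and du1: "\<And>p. p \<in> S \<Longrightarrow> u1 differentiable (at p within S)"
   and du2: "\<And>p. p \<in> S \<Longrightarrow> u2 differentiable (at p within S)"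
   and cu: "continuous_on S u" and cu1: "continuous_on S u1" and cu2: "continuous_on S u2"
   and cu3: "continuous_on S u3" and cu2t: "continuous_on S u2t"
    using C3' by (simp_all add: u1_def u2_def u3_def u2t_def)
  have pde': "\<And>x s. (x,s) \<in> S \<Longrightarrow> u2t (x,s) = - (u (x,s) * u3 (x,s) + \<beta> * u1 (x,s) * u2 (x,s) + \<alpha> s * u2 (x,s))"
  proof -
    fix x s assume "(x,s) \<in> S"
    then have "u2t (x,s) + u (x,s) * u3 (x,s) + \<beta> * u1 (x,s) * u2 (x,s) + \<alpha> s * u2 (x,s) = 0"
      using pde unfolding u1_def u2_def u3_def u2t_def by blast
    then show "u2t (x,s) = - (u (x,s) * u3 (x,s) + \<beta> * u1 (x,s) * u2 (x,s) + \<alpha> s * u2 (x,s))" by linarith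
  qed
  have slice: "\<And>x s. x \<in> {0..1} \<Longrightarrow> s \<in> {0..<T} \<Longrightarrow> (x,s) \<in> S" by (simp add: S_def)
  have Hx: "\<And>s. s \<in> {0..<T} \<Longrightarrow> ((\<lambda>x. x * u2 (x,s)) has_integral H s) {0..1}"
  proof -
    fix s assume s: "s \<in> {0..<T}"
    have "((\<lambda>x. x * u2 (x,s)) has_integral ((\<lambda>x. x * u1 (x,s) - u (x,s)) 1 - (\<lambda>x. x * u1 (x,s) - u (x,s)) 0)) {0..1}"
    proof (rule fundamental_theorem_of_calculus)
      fix x :: real assume x: "x \<in> {0..1}"
      have a: "((\<lambda>y. u (y,s)) has_real_derivative u1 (x,s)) (at x within {0..1})"
        unfolding u1_def by (rule pdx_deriv[OF du]) (use x s slice in auto)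
      have b: "((\<lambda>y. u1 (y,s)) has_real_derivative u2 (x,s)) (at x within {0..1})"
        unfolding u2_def by (rule pdx_deriv[OF du1]) (use x s slice in auto)
      have "((\<lambda>x. x * u1 (x,s) - u (x,s)) has_real_derivative (1 * u1 (x,s) + x * u2 (x,s) - u1 (x,s))) (at x within {0..1})"
        by (rule derivative_eq_intros a b refl | simp)+
      then show "((\<lambda>x. x * u1 (x,s) - u (x,s)) has_vector_derivative x * u2 (x,s)) (at x within {0..1})"
        by (simp add: has_real_derivative_iff_has_vector_derivative)
    qed simp
    then show "((\<lambda>x. x * u2 (x,s)) has_integral H s) {0..1}"
      using bc s H_def by (simp add: u1_def)
  qed
  fix t assume t: "t \<in> {0..<T}"
  have dd: "\<And>x. x \<in> {0..1} \<Longrightarrow>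
      ((\<lambda>y. u (y,t)) has_real_derivative u1 (x,t)) (at x within {0..1}) \<and>
      ((\<lambda>y. u1 (y,t)) has_real_derivative u2 (x,t)) (at x within {0..1}) \<and>
      ((\<lambda>y. u2 (y,t)) has_real_derivative u3 (x,t)) (at x within {0..1})"
    unfolding u1_def u2_def u3_def
    by (intro conjI pdx_deriv du du1[unfolded u1_def] du2[unfolded u2_def u1_def]) (use t slice in auto)
  have cs1: "\<And>g. continuous_on S g \<Longrightarrow> continuous_on {0..1} (\<lambda>x. g (x,t))"
    by (rule cont_slice) (use t slice in auto)
  have "((\<lambda>x. u1 (x,t)) has_integral (u (1,t) - u (0,t))) {0..1}"
    by (rule fundamental_theorem_of_calculus) (use dd in \<open>auto simp: has_real_derivative_iff_has_vector_derivative\<close>)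
  then have p1: "H t = - integral {0..1} (\<lambda>x. u1 (x,t))"
    using bc t H_def by (simp add: integral_unique)
  define a where "a = (\<beta> - 1) / 2"
  define c where "c = (3 - \<beta>) / 2"
  define P where "P = (\<lambda>x. x * u (x,t) * u2 (x,t) + a * x * (u1 (x,t))^2 - u (x,t) * u1 (x,t)
      + \<alpha> t * (x * u1 (x,t) - u (x,t)))"
  have "((\<lambda>x. x * u (x,t) * u3 (x,t) + \<beta> * x * u1 (x,t) * u2 (x,t) + \<alpha> t * (x * u2 (x,t)) - c * (u1 (x,t))^2)
      has_integral (P 1 - P 0)) {0..1}"
  proof (rule fundamental_theorem_of_calculus)
    fix x :: real assume x: "x \<in> {0..1}"
    note d = dd[OF x]
    have D: "(P has_real_derivative
       ((1 * u (x,t) + x * u1 (x,t)) * u2 (x,t) + (x * u (x,t)) * u3 (x,t)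
        + a * (1 * (u1 (x,t))^2 + x * (2 * u1 (x,t) * u2 (x,t)))
        - (u1 (x,t) * u1 (x,t) + u (x,t) * u2 (x,t))
        + \<alpha> t * ((1 * u1 (x,t) + x * u2 (x,t)) - u1 (x,t)))) (at x within {0..1})"
      unfolding P_def
      by (rule derivative_eq_intros d[THEN conjunct1] d[THEN conjunct2, THEN conjunct1] d[THEN conjunct2, THEN conjunct2] refl | simp add: algebra_simps)+
    have E: "((1 * u (x,t) + x * u1 (x,t)) * u2 (x,t) + (x * u (x,t)) * u3 (x,t)
        + a * (1 * (u1 (x,t))^2 + x * (2 * u1 (x,t) * u2 (x,t)))
        - (u1 (x,t) * u1 (x,t) + u (x,t) * u2 (x,t))
        + \<alpha> t * ((1 * u1 (x,t) + x * u2 (x,t)) - u1 (x,t)))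
      = x * u (x,t) * u3 (x,t) + \<beta> * x * u1 (x,t) * u2 (x,t) + \<alpha> t * (x * u2 (x,t)) - c * (u1 (x,t))^2"
      unfolding a_def c_def by (simp add: field_simps power2_eq_square)
    show "(P has_vector_derivative x * u (x,t) * u3 (x,t) + \<beta> * x * u1 (x,t) * u2 (x,t) + \<alpha> t * (x * u2 (x,t)) - c * (u1 (x,t))^2) (at x within {0..1})"
      using D unfolding E has_real_derivative_iff_has_vector_derivative .
  qed simp
  moreover have "P 1 - P 0 = \<alpha> t * H t"
    using bc t H_def by (simp add: P_def u1_def)
  ultimately have i3: "((\<lambda>x. x * u (x,t) * u3 (x,t) + \<beta> * x * u1 (x,t) * u2 (x,t) + \<alpha> t * (x * u2 (x,t)) - c * (u1 (x,t))^2)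
      has_integral (\<alpha> t * H t)) {0..1}" by simp
  have iq: "((\<lambda>x. (u1 (x,t))^2) has_integral integral {0..1} (\<lambda>x. (u1 (x,t))^2)) {0..1}"
    by (intro integrable_integral integrable_continuous_interval continuous_intros cs1 cu1)
  have i4: "((\<lambda>x. x * u2t (x,t)) has_integral - (\<alpha> t * H t + c * integral {0..1} (\<lambda>x. (u1 (x,t))^2))) {0..1}"
  proof -
    have "((\<lambda>x. - ((x * u (x,t) * u3 (x,t) + \<beta> * x * u1 (x,t) * u2 (x,t) + \<alpha> t * (x * u2 (x,t)) - c * (u1 (x,t))^2)
       + c * (u1 (x,t))^2)) has_integral - (\<alpha> t * H t + c * integral {0..1} (\<lambda>x. (u1 (x,t))^2))) {0..1}"
      using has_integral_neg[OF has_integral_add[OF i3 has_integral_mult_right[OF iq, of c]]] by simp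
    then show ?thesis
    proof (rule has_integral_eq[rotated])
      fix x :: real assume "x \<in> {0..1}"
      then have e: "u2t (x,t) = - (u (x,t) * u3 (x,t) + \<beta> * u1 (x,t) * u2 (x,t) + \<alpha> t * u2 (x,t))"
        using pde' slice t by blast
      then show "- (x * u (x,t) * u3 (x,t) + \<beta> * x * u1 (x,t) * u2 (x,t) + \<alpha> t * (x * u2 (x,t)) - c * (u1 (x,t))^2
       + c * (u1 (x,t))^2) = x * u2t (x,t)" unfolding e by (simp add: algebra_simps)
    qed
  qed
  have L: "((\<lambda>s. integral (cbox 0 1) (\<lambda>x. x * u2 (x,s))) has_field_derivative integral (cbox 0 1) (\<lambda>x. x * u2t (x,t))) (at t within {0..<T})"
  proof (rule leibniz_rule_field_derivative[where f="\<lambda>s x. x * u2 (x,s)" and fx="\<lambda>s x. x * u2t (x,s)"])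
    fix s x assume s: "s \<in> {0..<T}" and x: "x \<in> cbox (0::real) 1"
    have "((\<lambda>y. u2 (x,y)) has_real_derivative u2t (x,s)) (at s within {0..<T})"
      unfolding u2t_def by (rule pdt_deriv[OF du2]) (use x s slice in auto)
    then show "((\<lambda>s. x * u2 (x,s)) has_real_derivative x * u2t (x,s)) (at s within {0..<T})"
      by (rule DERIV_cmult)
  next
    fix s assume s: "s \<in> {0..<T}"
    show "(\<lambda>x. x * u2 (x,s)) integrable_on cbox 0 1" using Hx[OF s] by auto
  next
    have "continuous_on ({0..<T} \<times> {0..1}) (\<lambda>p. snd p * u2t (snd p, fst p))"
      by (intro continuous_intros continuous_on_compose2[OF cu2t]) (auto simp: S_def)
    then show "continuous_on ({0..<T} \<times> cbox 0 1) (\<lambda>(s, x). x * u2t (x,s))"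
      by (simp add: split_beta)
  qed (use t in auto)
  have HD: "(H has_real_derivative - (\<alpha> t * H t + c * integral {0..1} (\<lambda>x. (u1 (x,t))^2))) (at t within {0..<T})"
  proof (rule has_field_derivative_transform_within[OF _ zero_less_one t])
    show "((\<lambda>s. integral (cbox 0 1) (\<lambda>x. x * u2 (x,s))) has_field_derivative - (\<alpha> t * H t + c * integral {0..1} (\<lambda>x. (u1 (x,t))^2))) (at t within {0..<T})"
      using L i4 by (simp add: integral_unique)
    fix s assume "s \<in> {0..<T}"
    then show "integral (cbox 0 1) (\<lambda>x. x * u2 (x,s)) = H s" using Hx by (simp add: integral_unique)
  qed
  have cn: "c = real n / (real n - 1)"
    using n unfolding c_def beta by (simp add: field_simps)
  have cpos: "c \<ge> 0" using n cn by simp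
  have CS: "(H t)^2 \<le> integral {0..1} (\<lambda>x. (u1 (x,t))^2)"
    using cs_ineq[OF cs1[OF cu1]] p1 by simp
  show "H t = - integral {0..1} (\<lambda>x. pdx S u (x, t)) \<and>
     (\<exists>H'. (H has_real_derivative H') (at t within {0..<T}) \<and>
        H' + \<alpha> t * H t + real n / (real n - 1) * integral {0..1} (\<lambda>x. (pdx S u (x, t))^2) = 0 \<and>
        H' + \<alpha> t * H t + real n / (real n - 1) * (H t)^2 \<le> 0)"
  proof (intro conjI exI)
    show "H t = - integral {0..1} (\<lambda>x. pdx S u (x, t))" using p1 by (simp add: u1_def)
    show "(H has_real_derivative - (\<alpha> t * H t + c * integral {0..1} (\<lambda>x. (u1 (x,t))^2))) (at t within {0..<T})" by (rule HD)
    show "- (\<alpha> t * H t + c * integral {0..1} (\<lambda>x. (u1 (x,t))^2)) + \<alpha> t * H t + real n / (real n - 1) * integral {0..1} (\<lambda>x. (pdx S u (x, t))^2) = 0"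
      using cn by (simp add: u1_def)
    have "c * (H t)^2 \<le> c * integral {0..1} (\<lambda>x. (u1 (x,t))^2)" using CS cpos by (rule mult_left_mono)
    then show "- (\<alpha> t * H t + c * integral {0..1} (\<lambda>x. (u1 (x,t))^2)) + \<alpha> t * H t + real n / (real n - 1) * (H t)^2 \<le> 0"
      using cn by simp
  qed
qed

end
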